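(* Let $r=[r_0,\ldots,r_m]$ and $c=[c_0,\ldots,c_n]$ be selections of rows and columns of the Pascal upper triangular matrix $T$. If $r_0>c_n$, then $T_{r,c}$ is the zero matrix and has rank $0$. Otherwise, define $M:=\max\{i : r_i\le c_n\}$, $\beta_0:=\min\{k : r_0\le c_k\}$, and for $i=1,\ldots,M$, $\beta_i:=\max\{\min\{k: r_i\le c_k\},\ \beta_{i-1}+1\}$; let $p:=\max\{i\in\{0,\ldots,M\} : \beta_i\le n\}$, $\alpha=[0,1,\ldots,p]$, $\beta=[\beta_0,\ldots,\beta_p]$, $\hat r=[r_0,\ldots,r_p]$ and $\hat c=[c_{\beta_0},\ldots,c_{\beta_p}]$. Then $\{\hat r,\hat c\}$ is a maximal ordered sub-pair of $\{r,c\}$; consequently $\operatorname{rank}(T_{r,c})=p+1$, $T_{\hat r,\hat c}$ is invertible, the rows of $T_{\hat r,c}$ form a basis of the row space of $T_{r,c}$, and the columns of $T_{r,\hat c}$ form a basis of the column space of $T_{r,c}$.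
   Context: The Pascal upper triangular matrix is the infinite matrix $T=(T_{i,j})_{i,j\ge 0}$ with $T_{i,j}=\binom{j}{i}$, where $\binom{j}{i}:=0$ if $i>j$ (rows and columns indexed from $0$). A selection of rows (resp. columns) is a strictly increasing finite sequence of nonnegative integers. For selections $r=[r_0,\ldots,r_m]$ and $c=[c_0,\ldots,c_n]$, $T_{r,c}$ denotes the $(m+1)\times(n+1)$ matrix whose $(i,j)$ entry is $\binom{c_j}{r_i}$. A pair $\{\hat r,\hat c\}$ is an ordered sub-pair of $\{r,c\}$ of length $p+1$ if $\hat r=[\hat r_0,\ldots,\hat r_p]$ is a subsequence of $r$, $\hat c=[\hat c_0,\ldots,\hat c_p]$ is a subsequence of $c$, and $\hat r_i\le \hat c_i$ for all $i=0,\ldots,p$ (the empty pair has length $0$). It is maximal if no ordered sub-pair of $\{r,c\}$ has length greater than $p+1$. *)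

theory Defs
  imports "Jordan_Normal_Form.DL_Rank" "HOL-Library.Sublist"
begin

definition selection :: "nat list \<Rightarrow> bool" where
  "selection s \<longleftrightarrow> s \<noteq> [] \<and> sorted_wrt (<) s"

definition pascal_sub :: "nat list \<Rightarrow> nat list \<Rightarrow> real mat" where
  "pascal_sub r c = mat (length r) (length c) (\<lambda>(i,j). real ((c ! j) choose (r ! i)))"

definition ordered_subpair :: "nat list \<Rightarrow> nat list \<Rightarrow> nat list \<Rightarrow> nat list \<Rightarrow> bool" where
  "ordered_subpair r c rh ch \<longleftrightarrow>
     subseq rh r \<and> subseq ch c \<and> length rh = length ch \<and> (\<forall>i < length rh. rh ! i \<le> ch ! i)"

definition maximal_ordered_subpair :: "nat list \<Rightarrow> nat list \<Rightarrow> nat list \<Rightarrow> nat list \<Rightarrow> bool" where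
  "maximal_ordered_subpair r c rh ch \<longleftrightarrow>
     ordered_subpair r c rh ch \<and>
     (\<forall>rh' ch'. ordered_subpair r c rh' ch' \<longrightarrow> length rh' \<le> length rh)"

text \<open>The quantities M, beta_i, p of the theorem (0-based indices; c_n = last c).\<close>
definition selM :: "nat list \<Rightarrow> nat list \<Rightarrow> nat" where
  "selM r c = (GREATEST i. i < length r \<and> r ! i \<le> last c)"

fun sel_beta :: "nat list \<Rightarrow> nat list \<Rightarrow> nat \<Rightarrow> nat" where
  "sel_beta r c 0 = (LEAST k. k < length c \<and> r ! 0 \<le> c ! k)"
| "sel_beta r c (Suc i) = max (LEAST k. k < length c \<and> r ! Suc i \<le> c ! k) (sel_beta r c i + 1)"

definition sel_p :: "nat list \<Rightarrow> nat list \<Rightarrow> nat" where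
  "sel_p r c = (GREATEST i. i \<le> selM r c \<and> sel_beta r c i < length c)"

definition sel_rhat :: "nat list \<Rightarrow> nat list \<Rightarrow> nat list" where
  "sel_rhat r c = take (sel_p r c + 1) r"

definition sel_chat :: "nat list \<Rightarrow> nat list \<Rightarrow> nat list" where
  "sel_chat r c = map (\<lambda>i. c ! sel_beta r c i) [0..<sel_p r c + 1]"

end

theory Submission
  imports Defs
begin


lemma det_rows_sum:
  fixes f g :: "nat \<Rightarrow> nat \<Rightarrow> 'a::comm_ring_1"
  shows "det (mat n n (\<lambda>(i,j). f i j + g i j)) =
    (\<Sum>S\<in>Pow {0..<n}. det (mat n n (\<lambda>(i,j). if i \<in> S then g i j else f i j)))"
proof -
  let ?P = "{p. p permutes {0..<n}}"
  have pin: "p permutes {0..<n} \<Longrightarrow> i < n \<Longrightarrow> p i < n" for p i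
    using permutes_in_image by fastforce
  have "det (mat n n (\<lambda>(i,j). f i j + g i j)) =
     (\<Sum>p\<in>?P. signof p * (\<Prod>i=0..<n. g i (p i) + f i (p i)))"
    by (subst det_def'[of _ n], simp, intro sum.cong refl arg_cong2[where f="(*)"] prod.cong,
        auto simp: pin add.commute)
  also have "\<dots> = (\<Sum>p\<in>?P. \<Sum>S\<in>Pow {0..<n}. signof p * ((\<Prod>i\<in>S. g i (p i)) * (\<Prod>i\<in>{0..<n}-S. f i (p i))))"
    by (simp add: prod_add sum_distrib_left)
  also have "\<dots> = (\<Sum>S\<in>Pow {0..<n}. \<Sum>p\<in>?P. signof p * ((\<Prod>i\<in>S. g i (p i)) * (\<Prod>i\<in>{0..<n}-S. f i (p i))))"
    by (rule sum.swap)
  also have "\<dots> = (\<Sum>S\<in>Pow {0..<n}. det (mat n n (\<lambda>(i,j). if i \<in> S then g i j else f i j)))"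
  proof (rule sum.cong[OF refl])
    fix S assume S: "S \<in> Pow {0..<n}"
    show "(\<Sum>p\<in>?P. signof p * ((\<Prod>i\<in>S. g i (p i)) * (\<Prod>i\<in>{0..<n}-S. f i (p i)))) =
      det (mat n n (\<lambda>(i,j). if i \<in> S then g i j else f i j))"
    proof (subst det_def'[of _ n], simp, intro sum.cong refl arg_cong2[where f="(*)"])
      fix p assume p: "p \<in> ?P"
      have "(\<Prod>i = 0..<n. mat n n (\<lambda>(i,j). if i \<in> S then g i j else f i j) $$ (i, p i))
          = (\<Prod>i = 0..<n. (if i \<in> S then g i (p i) else f i (p i)))"
        using p pin by (intro prod.cong, auto)
      also have "\<dots> = (\<Prod>i\<in>S. g i (p i)) * (\<Prod>i\<in>{0..<n}-S. f i (p i))"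
        using S by (subst prod.If_cases, auto simp: Int_absorb1 Diff_eq)
      finally show "(\<Prod>i\<in>S. g i (p i)) * (\<Prod>i\<in>{0..<n}-S. f i (p i)) =
         (\<Prod>i = 0..<n. mat n n (\<lambda>(i,j). if i \<in> S then g i j else f i j) $$ (i, p i))" by simp
    qed
  qed
  finally show ?thesis .
qed

lemma pascal_sub_carrier[simp]: "pascal_sub a b \<in> carrier_mat (length a) (length b)"
  by (simp add: pascal_sub_def)

lemma pascal_sub_index[simp]: "i < length a \<Longrightarrow> j < length b \<Longrightarrow>
  pascal_sub a b $$ (i,j) = real ((b!j) choose (a!i))"
  by (simp add: pascal_sub_def)

lemma pascal_sub_dims[simp]: "dim_row (pascal_sub a b) = length a" "dim_col (pascal_sub a b) = length b"
  by (simp_all add: pascal_sub_def)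

lemma sum_list_minus1_less: "b \<noteq> [] \<Longrightarrow> (\<forall>x\<in>set b. 0 < x) \<Longrightarrow>
   sum_list (map (\<lambda>x. x - 1) b) < sum_list (b::nat list)"
proof (induction b)
  case Nil then show ?case by simp
next
  case (Cons x b)
  show ?case
  proof (cases "b = []")
    case True then show ?thesis using Cons by simp
  next
    case False
    then have "sum_list (map (\<lambda>x. x - 1) b) < sum_list b" using Cons by auto
    then show ?thesis using Cons by simp
  qed
qed

lemma sorted_wrt_tl': "sorted_wrt P xs \<Longrightarrow> sorted_wrt P (tl xs)"
  by (cases xs) auto

lemma det_zero_row_real:
  assumes A: "(A :: real mat) \<in> carrier_mat n n" and i: "i < n" and z: "\<And>j. j < n \<Longrightarrow> A $$ (i,j) = 0"
  shows "det A = 0"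
  using laplace_expansion_row[OF A i] z by simp

lemma pascal_TP:
  "length a = length b \<Longrightarrow> sorted_wrt (<) a \<Longrightarrow> sorted_wrt (<) b \<Longrightarrow>
   0 \<le> det (pascal_sub a b) \<and> ((\<forall>i<length a. a!i \<le> b!i) \<longrightarrow> 0 < det (pascal_sub a b))"
proof (induction b arbitrary: a rule: measure_induct_rule[where f="\<lambda>b. sum_list b + length b"])
  case (less b a)
  define n where "n = length a"
  have lb: "length b = n" using less n_def by simp
  have A: "pascal_sub a b \<in> carrier_mat n n" using lb n_def pascal_sub_carrier[of a b] by metis
  have sa: "i < j \<Longrightarrow> j < n \<Longrightarrow> a!i < a!j" for i j
    using less(3) n_def by (simp add: sorted_wrt_iff_nth_less)
  have sb: "i < j \<Longrightarrow> j < n \<Longrightarrow> b!i < b!j" for i j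
    using less(4) lb by (simp add: sorted_wrt_iff_nth_less)
  show ?case
  proof (cases "n = 0")
    case True
    then show ?thesis using A by simp
  next
    case npos: False
    show ?thesis
    proof (cases "b!0 = 0")
      case b0: True
      have entry0: "pascal_sub a b $$ (i,0) = (if a!i = 0 then 1 else 0)" if "i < n" for i
        using that npos b0 lb n_def by simp
      have lap: "det (pascal_sub a b) = (\<Sum>i<n. pascal_sub a b $$ (i,0) * cofactor (pascal_sub a b) i 0)"
        using laplace_expansion_column[OF A] npos by simp
      show ?thesis
      proof (cases "a!0 = 0")
        case False
        have nz: "a!i \<noteq> 0" if "i < n" for i
          using sa[of 0 i] that False by (cases i) auto
        then have "det (pascal_sub a b) = 0" unfolding lap by (intro sum.neutral) (auto simp: entry0 nz)
        moreover have "\<not> (a!0 \<le> b!0)" using False b0 by simp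
        ultimately show ?thesis using npos n_def by auto
      next
        case a0: True
        have nz: "a!i \<noteq> 0" if "i < n" "i > 0" for i
          using sa[of 0 i] that by simp
        have "det (pascal_sub a b) = pascal_sub a b $$ (0,0) * cofactor (pascal_sub a b) 0 0
            + (\<Sum>i\<in>{..<n} - {0}. pascal_sub a b $$ (i,0) * cofactor (pascal_sub a b) i 0)"
          unfolding lap using npos by (subst sum.remove[of _ 0], auto)
        also have "(\<Sum>i\<in>{..<n} - {0}. pascal_sub a b $$ (i,0) * cofactor (pascal_sub a b) i 0) = 0"
          by (intro sum.neutral) (auto simp: entry0 nz)
        finally have "det (pascal_sub a b) = pascal_sub a b $$ (0,0) * cofactor (pascal_sub a b) 0 0"
          by simp
        also have "\<dots> = det (mat_delete (pascal_sub a b) 0 0)"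
          using entry0[of 0] npos a0 by (simp add: cofactor_def)
        also have "mat_delete (pascal_sub a b) 0 0 = pascal_sub (tl a) (tl b)"
          using lb n_def npos by (intro eq_matI, auto simp: mat_delete_def nth_tl)
        finally have deq: "det (pascal_sub a b) = det (pascal_sub (tl a) (tl b))" .
        have bne: "b = b!0 # tl b" using lb npos by (cases b, auto)
        have meas: "sum_list (tl b) + length (tl b) < sum_list b + length b"
          using bne b0 by (metis add.left_neutral add_less_mono1 length_Cons lessI sum_list_simps(2) add_strict_left_mono sum_list.Cons)
        have IH: "0 \<le> det (pascal_sub (tl a) (tl b)) \<and> ((\<forall>i<length (tl a). tl a!i \<le> tl b!i) \<longrightarrow> 0 < det (pascal_sub (tl a) (tl b)))"
          using less(1)[OF meas, of "tl a"] less(2-4) by (simp add: sorted_wrt_tl')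
        show ?thesis
        proof (intro conjI impI)
          show "0 \<le> det (pascal_sub a b)" using IH deq by simp
          assume "\<forall>i<length a. a ! i \<le> b ! i"
          then have "\<forall>i<length (tl a). tl a!i \<le> tl b!i" using lb n_def by (auto simp add: nth_tl)
          then show "0 < det (pascal_sub a b)" using IH deq by simp
        qed
      qed
    next
      case b0: False
      have bpos: "0 < b!j" if "j < n" for j using sb[of 0 j] b0 that by (cases j) auto
      define b' where "b' = map (\<lambda>x. x - 1) b"
      have lb': "length b' = n" using lb by (simp add: b'_def)
      have b'j: "b'!j = b!j - 1" if "j < n" for j using that lb by (simp add: b'_def)
      have sb': "sorted_wrt (<) b'"
        unfolding sorted_wrt_iff_nth_less lb'
      proof (intro allI impI)
        fix i j assume ij: "i < j" "j < n"
        then show "b'!i < b'!j" using sb[of i j] bpos[of i] b'j[of i] b'j[of j] by simp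
      qed
      have meas: "sum_list b' + length b' < sum_list b + length b"
      proof -
        have "sum_list b' < sum_list b" unfolding b'_def
          using npos lb bpos by (intro sum_list_minus1_less) (auto simp: in_set_conv_nth)
        then show ?thesis using lb lb' by simp
      qed
      define F where "F i j = real (b'!j choose a!i)" for i j
      define G where "G i j = (if a!i = 0 then 0 else real (b'!j choose (a!i - 1)))" for i j
      have Aeq: "pascal_sub a b = mat n n (\<lambda>(i,j). F i j + G i j)"
      proof (rule eq_matI)
        fix i j assume i: "i < dim_row (mat n n (\<lambda>(i,j). F i j + G i j))"
          and j: "j < dim_col (mat n n (\<lambda>(i,j). F i j + G i j))"
        then have i: "i < n" and j: "j < n" by auto
        have bj: "b!j = Suc (b'!j)" using b'j[OF j] bpos[OF j] by simp
        show "pascal_sub a b $$ (i,j) = mat n n (\<lambda>(i,j). F i j + G i j) $$ (i,j)"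
          using i j lb n_def bj by (cases "a!i") (auto simp: F_def G_def)
      qed (use lb n_def in auto)
      define MS where "MS S = mat n n (\<lambda>(i,j). if i \<in> S then G i j else F i j)" for S
      define aS where "aS S = map (\<lambda>i. if i \<in> S then a!i - 1 else a!i) [0..<n]" for S
      have laS: "length (aS S) = n" for S by (simp add: aS_def)
      have aSi: "i < n \<Longrightarrow> aS S ! i = (if i \<in> S then a!i - 1 else a!i)" for S i
        by (simp add: aS_def)
      have MS_eq: "MS S = pascal_sub (aS S) b'" if "\<forall>i\<in>S. a!i \<noteq> 0" for S
        using that by (intro eq_matI) (auto simp: MS_def laS lb' aSi F_def G_def)
      have MS_car: "MS S \<in> carrier_mat n n" for S by (simp add: MS_def)
      have aS_le: "aS S ! i \<le> aS S ! Suc i" if "Suc i < n" for S i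
        using sa[of i "Suc i"] that by (simp add: aSi; arith)
      have nonneg: "0 \<le> det (MS S)" for S
      proof (cases "\<exists>i\<in>S. i < n \<and> a!i = 0")
        case True
        then obtain i where i: "i \<in> S" "i < n" "a!i = 0" by auto
        have "det (MS S) = 0"
          by (rule det_zero_row_real[OF MS_car i(2)]) (use i in \<open>auto simp: MS_def G_def\<close>)
        then show ?thesis by simp
      next
        case False
        define S' where "S' = S \<inter> {0..<n}"
        have "MS S = MS S'" unfolding MS_def S'_def by (intro eq_matI) auto
        moreover have "aS S = aS S'" unfolding aS_def S'_def by auto
        moreover have "MS S' = pascal_sub (aS S') b'" using False by (intro MS_eq) (auto simp: S'_def)
        ultimately have MSe: "MS S = pascal_sub (aS S) b'" by simp
        show ?thesis
        proof (cases "sorted_wrt (<) (aS S)")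
          case True
          from less(1)[OF meas, of "aS S"] True sb' laS lb' show ?thesis by (simp add: MSe)
        next
          case False
          then obtain i where i: "Suc i < n" "\<not> aS S ! i < aS S ! Suc i"
            using laS by (auto simp: sorted_wrt_iff_nth_Suc_transp)
          have eq: "aS S ! i = aS S ! Suc i" using aS_le[of i S] i by simp
          have "det (pascal_sub (aS S) b') = 0"
            by (rule det_identical_rows[of _ n i "Suc i"], use laS lb' i eq in \<open>auto intro!: eq_vecI\<close>)
          then show ?thesis by (simp add: MSe)
        qed
      qed
      have detA: "det (pascal_sub a b) = (\<Sum>S\<in>Pow {0..<n}. det (MS S))"
        unfolding Aeq MS_def by (rule det_rows_sum)
      show ?thesis
      proof (intro conjI impI)
        show "0 \<le> det (pascal_sub a b)" unfolding detA by (intro sum_nonneg nonneg)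
        assume inter: "\<forall>i<length a. a ! i \<le> b ! i"
        define S0 where "S0 = {i. i < n \<and> a!i = b!i}"
        have S0p: "S0 \<in> Pow {0..<n}" by (auto simp: S0_def)
        have nzS0: "\<forall>i\<in>S0. a!i \<noteq> 0" using bpos by (auto simp: S0_def)
        have sorted0: "sorted_wrt (<) (aS S0)"
          unfolding sorted_wrt_iff_nth_Suc_transp[OF transp_on_less] laS
        proof (intro allI impI)
          fix i assume i: "Suc i < n"
          have ai: "a!i < a!Suc i" using sa[of i "Suc i"] i by simp
          have bi: "b!i < b!Suc i" using sb[of i "Suc i"] i by simp
          have le1: "a!i \<le> b!i" "a!Suc i \<le> b!Suc i" using inter i n_def by auto
          show "aS S0 ! i < aS S0 ! Suc i"
            using i ai bi le1 nzS0 bpos[of i] unfolding aSi[OF i] aSi[OF Suc_lessD[OF i]] S0_def by auto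
        qed
        have inter0: "\<forall>i<length (aS S0). aS S0 ! i \<le> b'!i"
        proof (intro allI impI)
          fix i assume "i < length (aS S0)"
          then have i: "i < n" by (simp add: laS)
          have "a!i \<le> b!i" using inter i n_def by simp
          then show "aS S0 ! i \<le> b'!i" using i by (simp add: aSi b'j S0_def; arith)
        qed
        have pos0: "0 < det (MS S0)"
          using less(1)[OF meas, of "aS S0"] sorted0 sb' laS lb' inter0 MS_eq[OF nzS0] by simp
        have "det (MS S0) \<le> (\<Sum>S\<in>Pow {0..<n}. det (MS S))"
          by (rule member_le_sum[OF S0p]) (auto intro: nonneg)
        then show "0 < det (pascal_sub a b)" unfolding detA using pos0 by simp
      qed
    qed
  qed
qed

lemma pascal_det_pos:
  "length a = length b \<Longrightarrow> sorted_wrt (<) a \<Longrightarrow> sorted_wrt (<) b \<Longrightarrow>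
   (\<forall>i<length a. a!i \<le> b!i) \<Longrightarrow> det (pascal_sub a b) \<noteq> 0"
  using pascal_TP by force

context vec_space
begin

lemma mult_in_span:
  assumes C: "(C :: 'a mat) \<in> carrier_mat n k" and x: "(x :: 'a vec) \<in> carrier_vec k"
  shows "C *\<^sub>v x \<in> span (set (cols C))"
proof -
  have cC: "set (cols C) \<subseteq> carrier_vec n" using C cols_dim by blast
  have "lincomb_list (\<lambda>i. x $ i) (cols C) = mat_of_cols n (cols C) *\<^sub>v vec (length (cols C)) (\<lambda>i. x $ i)"
    by (rule lincomb_list_as_mat_mult) (use cC in auto)
  also have "mat_of_cols n (cols C) = C" using C mat_of_cols_cols[of C] by auto
  also have "vec (length (cols C)) (\<lambda>i. x $ i) = x" using C x by auto
  finally have "\<exists>c. C *\<^sub>v x = lincomb_list c (cols C)" by metis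
  then have "C *\<^sub>v x \<in> span_list (cols C)" unfolding span_list_def by simp
  then show ?thesis using span_list_as_span[OF cC] by simp
qed

lemma ker_indep:
  assumes C: "(C :: 'a mat) \<in> carrier_mat n k"
  and ker: "\<And>x :: 'a vec. x \<in> carrier_vec k \<Longrightarrow> C *\<^sub>v x = 0\<^sub>v n \<Longrightarrow> x = 0\<^sub>v k"
  shows "distinct (cols C) \<and> lin_indpt (set (cols C))"
proof -
  have dist: "distinct (cols C)"
    unfolding distinct_conv_nth
  proof (intro allI impI)
    fix i j assume i: "i < length (cols C)" and j: "j < length (cols C)" and ij: "i \<noteq> j"
    show "cols C ! i \<noteq> cols C ! j"
    proof
      assume eq: "cols C ! i = cols C ! j"
      have ik: "i < k" and jk: "j < k" using i j C by auto
      define x :: "'a vec" where "x = unit_vec k i - unit_vec k j"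
      have xc: "x \<in> carrier_vec k" by (simp add: x_def)
      have "C *\<^sub>v x = 0\<^sub>v n"
      proof (rule eq_vecI)
        fix t assume "t < dim_vec (0\<^sub>v n)"
        then have t: "t < n" by simp
        have "(C *\<^sub>v x) $ t = row C t \<bullet> unit_vec k i - row C t \<bullet> unit_vec k j"
          using C t unfolding x_def by (simp add: scalar_prod_minus_distrib[of _ k])
        also have "\<dots> = C $$ (t,i) - C $$ (t,j)" using C t ik jk by simp
        also have "C $$ (t,i) = C $$ (t,j)"
          using arg_cong[OF eq, of "\<lambda>v. v $ t"] C t ik jk by simp
        finally show "(C *\<^sub>v x) $ t = 0\<^sub>v n $ t" using t by simp
      qed (use C in simp)
      moreover have "x \<noteq> 0\<^sub>v k"
      proof
        assume "x = 0\<^sub>v k"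
        then have "x $ i = 0" using ik by simp
        moreover have "x $ i = 1" using ik jk ij by (simp add: x_def)
        ultimately show False by simp
      qed
      ultimately show False using ker xc by blast
    qed
  qed
  have indep: "lin_indpt (set (cols C))"
  proof
    assume "lin_dep (set (cols C))"
    then obtain v where "v \<in> carrier_vec k" "v \<noteq> 0\<^sub>v k" "C *\<^sub>v v = 0\<^sub>v n"
      using lin_depE[OF C _ dist] by blast
    then show False using ker by blast
  qed
  show ?thesis using dist indep by simp
qed

lemma gen_cols:
  assumes A: "(A :: 'a mat) \<in> carrier_mat n nc" and C: "(C :: 'a mat) \<in> carrier_mat n k"
  and sub: "set (cols C) \<subseteq> set (cols A)"
  and ker: "\<And>x :: 'a vec. x \<in> carrier_vec k \<Longrightarrow> C *\<^sub>v x = 0\<^sub>v n \<Longrightarrow> x = 0\<^sub>v k"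
  and gen: "\<And>j. j < nc \<Longrightarrow> \<exists>x. x \<in> carrier_vec k \<and> col A j = C *\<^sub>v (x :: 'a vec)"
  shows "distinct (cols C) \<and> lin_indpt (set (cols C)) \<and> span (set (cols C)) = span (set (cols A)) \<and> rank A = k"
proof -
  have cC: "set (cols C) \<subseteq> carrier_vec n" using C cols_dim by blast
  have cA: "set (cols A) \<subseteq> carrier_vec n" using A cols_dim by blast
  have dist: "distinct (cols C)" and indep: "lin_indpt (set (cols C))"
    using ker_indep[OF C ker] by auto
  have sp: "span (set (cols C)) = span (set (cols A))"
  proof
    show "span (set (cols C)) \<subseteq> span (set (cols A))"
      using span_is_monotone[OF sub] .
    have "set (cols A) \<subseteq> span (set (cols C))"
    proof
      fix w assume "w \<in> set (cols A)"
      then obtain j where j: "j < nc" "w = col A j" using A by (auto simp: in_set_conv_nth)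
      then obtain x where "x \<in> carrier_vec k" "w = C *\<^sub>v x" using gen by blast
      then show "w \<in> span (set (cols C))" using mult_in_span[OF C] by simp
    qed
    then show "span (set (cols A)) \<subseteq> span (set (cols C))"
      using span_subsetI[OF cC] by blast
  qed
  have "rank A = rank C" unfolding rank_def sp ..
  also have "rank C = k" using lin_indpt_full_rank[OF C dist indep] .
  finally show ?thesis using dist indep sp by simp
qed

end



lemma pascal_cols_sub: "set b' \<subseteq> set b \<Longrightarrow> set (cols (pascal_sub a b')) \<subseteq> set (cols (pascal_sub a b))"
proof
  fix w assume sub: "set b' \<subseteq> set b" and w: "w \<in> set (cols (pascal_sub a b'))"
  then obtain j where j: "j < length b'" "w = col (pascal_sub a b') j" by (auto simp: in_set_conv_nth)
  then have "b'!j \<in> set b" using sub nth_mem by blast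
  then obtain k where k: "k < length b" "b!k = b'!j" by (auto simp: in_set_conv_nth)
  have "w = col (pascal_sub a b) k" using j k by (intro eq_vecI) auto
  then show "w \<in> set (cols (pascal_sub a b))" using k by (auto simp: in_set_conv_nth)
qed

lemma pascal_rows_sub: "set a' \<subseteq> set a \<Longrightarrow> set (rows (pascal_sub a' b)) \<subseteq> set (rows (pascal_sub a b))"
proof
  fix w assume sub: "set a' \<subseteq> set a" and w: "w \<in> set (rows (pascal_sub a' b))"
  then obtain j where j: "j < length a'" "w = row (pascal_sub a' b) j" by (auto simp: in_set_conv_nth)
  then have "a'!j \<in> set a" using sub nth_mem by blast
  then obtain k where k: "k < length a" "a!k = a'!j" by (auto simp: in_set_conv_nth)
  have "w = row (pascal_sub a b) k" using j k by (intro eq_vecI) auto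
  then show "w \<in> set (rows (pascal_sub a b))" using k by (auto simp: in_set_conv_nth)
qed

lemma pascal_ker:
  assumes sub: "set a' \<subseteq> set a" and d: "det (pascal_sub a' b') \<noteq> 0" and l: "length a' = length b'"
    and x: "x \<in> carrier_vec (length b')" and z: "pascal_sub a b' *\<^sub>v x = 0\<^sub>v (length a)"
  shows "x = 0\<^sub>v (length b')"
proof -
  have "pascal_sub a' b' *\<^sub>v x = 0\<^sub>v (length a')"
  proof (rule eq_vecI)
    fix i assume "i < dim_vec (0\<^sub>v (length a'))"
    then have i: "i < length a'" by simp
    then have "a'!i \<in> set a" using sub nth_mem by blast
    then obtain t where t: "t < length a" "a!t = a'!i" by (auto simp: in_set_conv_nth)
    have "(pascal_sub a' b' *\<^sub>v x) $ i = (pascal_sub a b' *\<^sub>v x) $ t"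
      using i t x by (simp add: mult_mat_vec_def scalar_prod_def)
    also have "\<dots> = 0" using z t by simp
    finally show "(pascal_sub a' b' *\<^sub>v x) $ i = 0\<^sub>v (length a') $ i" using i by simp
  qed simp
  moreover have "pascal_sub a' b' \<in> carrier_mat (length b') (length b')" using l by (metis pascal_sub_carrier)
  ultimately show ?thesis using det_0_iff_vec_prod_zero_field[of "pascal_sub a' b'" "length b'"] d x l by auto
qed

lemma pascal_kerT:
  assumes sub: "set b' \<subseteq> set b" and d: "det (pascal_sub a' b') \<noteq> 0" and l: "length a' = length b'"
    and y: "y \<in> carrier_vec (length a')" and z: "transpose_mat (pascal_sub a' b) *\<^sub>v y = 0\<^sub>v (length b)"
  shows "y = 0\<^sub>v (length a')"
proof -
  have car: "pascal_sub a' b' \<in> carrier_mat (length b') (length b')" using l by (metis pascal_sub_carrier)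
  have "transpose_mat (pascal_sub a' b') *\<^sub>v y = 0\<^sub>v (length b')"
  proof (rule eq_vecI)
    fix j assume "j < dim_vec (0\<^sub>v (length b'))"
    then have j: "j < length b'" by simp
    then have "b'!j \<in> set b" using sub nth_mem by blast
    then obtain k where k: "k < length b" "b!k = b'!j" by (auto simp: in_set_conv_nth)
    have "(transpose_mat (pascal_sub a' b') *\<^sub>v y) $ j = (transpose_mat (pascal_sub a' b) *\<^sub>v y) $ k"
      using j k y by (simp add: mult_mat_vec_def scalar_prod_def)
    also have "\<dots> = 0" using z k by simp
    finally show "(transpose_mat (pascal_sub a' b') *\<^sub>v y) $ j = 0\<^sub>v (length b') $ j" using j by simp
  qed simp
  moreover have "det (transpose_mat (pascal_sub a' b')) \<noteq> 0" using d det_transpose[OF car] by simp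
  moreover have "transpose_mat (pascal_sub a' b') \<in> carrier_mat (length b') (length b')" using car by simp
  ultimately show ?thesis using det_0_iff_vec_prod_zero_field[of "transpose_mat (pascal_sub a' b')" "length b'"] y l by auto
qed

lemma det_inverse_ex:
  assumes A: "(A :: real mat) \<in> carrier_mat n n" and d: "det A \<noteq> 0"
  shows "\<exists>B \<in> carrier_mat n n. A * B = 1\<^sub>m n \<and> B * A = 1\<^sub>m n"
proof -
  have "A \<in> Units (ring_mat TYPE(real) n ())" by (rule det_non_zero_imp_unit[OF A d])
  then show ?thesis unfolding Units_def ring_mat_simps by (simp only: mem_Collect_eq Bex_def) blast
qed

lemma sum_shift_if: "(\<Sum>i<(j0::nat)+q. (if j0 \<le> i then f (i - j0) else (0::real))) = (\<Sum>i<q. f i)"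
proof (induction q)
  case 0
  have "(\<Sum>i<j0. (if j0 \<le> i then f (i - j0) else 0)) = 0" by (intro sum.neutral) auto
  then show ?case by simp
next
  case (Suc q) then show ?case by simp
qed

lemma subseq_sorted: "subseq xs ys \<Longrightarrow> sorted_wrt (<) ys \<Longrightarrow> sorted_wrt (<) (xs :: nat list)"
proof (induction rule: list_emb.induct)
  case (list_emb_Nil ys) then show ?case by simp
next
  case (list_emb_Cons xs ys y) then show ?case by simp
next
  case (list_emb_Cons2 x y xs ys)
  then show ?case using list_emb_set[OF list_emb_Cons2(2)] by auto
qed

lemma subseq_set: assumes "subseq xs ys" shows "set xs \<subseteq> set ys"
proof
  fix x assume "x \<in> set xs"
  then show "x \<in> set ys" using list_emb_set[OF assms] by blast
qed



lemma sorted_nth_le: "sorted_wrt (<) (xs::nat list) \<Longrightarrow> i \<le> j \<Longrightarrow> j < length xs \<Longrightarrow> xs!i \<le> xs!j"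
  by (metis le_eq_less_or_eq less_imp_le sorted_wrt_iff_nth_less)

lemma row_block:
  fixes r c :: "nat list" and t j0 g q :: nat
  assumes sr: "sorted_wrt (<) r" and sc: "sorted_wrt (<) c"
  and jq: "j0 + q \<le> length r" and gq: "g + q = length c"
  and inter: "\<And>i. i < q \<Longrightarrow> r!(j0+i) \<le> c!(g+i)"
  and t: "t < length r" "j0 \<le> t"
  and small: "\<And>k. k < g \<Longrightarrow> c!k < r!j0"
  shows "\<exists>y \<in> carrier_vec (j0+q). \<forall>k<length c. real (c!k choose r!t) = (\<Sum>i<j0+q. y$i * real (c!k choose r!i))"
proof -
  define a where "a = take q (drop j0 r)"
  define b where "b = drop g c"
  have la: "length a = q" using jq by (simp add: a_def)
  have lb: "length b = q" using gq by (simp add: b_def)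
  have ai: "a!i = r!(j0+i)" if "i < q" for i using that jq by (simp add: a_def)
  have bi: "b!i = c!(g+i)" if "i < q" for i using that gq by (simp add: b_def)
  have sa: "sorted_wrt (<) a" unfolding a_def using sr by (simp add: sorted_wrt_take sorted_wrt_drop)
  have sb: "sorted_wrt (<) b" unfolding b_def using sc by (simp add: sorted_wrt_drop)
  have d: "det (pascal_sub a b) \<noteq> 0"
    by (rule pascal_det_pos) (use la lb sa sb inter ai bi in auto)
  have S: "pascal_sub a b \<in> carrier_mat q q" using la lb pascal_sub_carrier[of a b] by simp
  define T where "T = transpose_mat (pascal_sub a b)"
  have T: "T \<in> carrier_mat q q" using S by (simp add: T_def)
  have dT: "det T \<noteq> 0" using d det_transpose[OF S] by (simp add: T_def)
  obtain Ti where Ti: "Ti \<in> carrier_mat q q" "T * Ti = 1\<^sub>m q" using det_inverse_ex[OF T dT] by blast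
  define w where "w = vec q (\<lambda>k'. real (c!(g+k') choose r!t))"
  define z where "z = Ti *\<^sub>v w"
  have zc: "z \<in> carrier_vec q" using Ti by (simp add: z_def w_def)
  have wc: "w \<in> carrier_vec q" by (simp add: w_def)
  have "T *\<^sub>v z = (T * Ti) *\<^sub>v w" unfolding z_def by (rule assoc_mult_mat_vec[symmetric, OF T Ti(1) wc])
  then have Tzw: "T *\<^sub>v z = w" using Ti wc by simp
  have Tz: "(\<Sum>i<q. z$i * real (c!(g+k') choose r!(j0+i))) = real (c!(g+k') choose r!t)"
    if k': "k' < q" for k'
  proof -
    have "(T *\<^sub>v z) $ k' = (\<Sum>i<q. z$i * real (c!(g+k') choose r!(j0+i)))"
      using k' zc la lb unfolding T_def
      by (auto simp: mult_mat_vec_def scalar_prod_def ai bi atLeast0LessThan mult.commute intro!: sum.cong)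
    then show ?thesis using Tzw k' by (simp add: w_def)
  qed
  define y where "y = vec (j0+q) (\<lambda>i. if j0 \<le> i then z$(i-j0) else 0)"
  have yc: "y \<in> carrier_vec (j0+q)" by (simp add: y_def)
  have rj0: "r!j0 \<le> r!i" if "j0 \<le> i" "i < length r" for i using sorted_nth_le[OF sr that] .
  show ?thesis
  proof (intro bexI[OF _ yc] allI impI)
    fix k assume k: "k < length c"
    show "real (c!k choose r!t) = (\<Sum>i<j0+q. y$i * real (c!k choose r!i))"
    proof (cases "k < g")
      case True
      have ck: "c!k < r!j0" using small[OF True] .
      have "(\<Sum>i<j0+q. y$i * real (c!k choose r!i)) = 0"
      proof (intro sum.neutral ballI)
        fix i assume "i \<in> {..<j0+q}"
        then have i: "i < j0 + q" by simp
        show "y$i * real (c!k choose r!i) = 0"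
        proof (cases "j0 \<le> i")
          case True
          then have "c!k < r!i" using ck rj0[of i] i jq by simp
          then show ?thesis by simp
        next
          case False then show ?thesis using i by (simp add: y_def)
        qed
      qed
      moreover have "c!k < r!t" using ck rj0[OF t(2) t(1)] by simp
      ultimately show ?thesis by simp
    next
      case False
      define k' where "k' = k - g"
      have kk: "k = g + k'" "k' < q" using False k gq by (auto simp: k'_def)
      have "(\<Sum>i<j0+q. y$i * real (c!k choose r!i))
          = (\<Sum>i<j0+q. (if j0 \<le> i then z$(i-j0) * real (c!(g+k') choose r!(j0 + (i-j0))) else 0))"
        by (intro sum.cong refl) (auto simp: y_def kk)
      also have "\<dots> = (\<Sum>i<q. z$i * real (c!(g+k') choose r!(j0+i)))"
        by (rule sum_shift_if)
      also have "\<dots> = real (c!k choose r!t)" using Tz[OF kk(2)] kk by simp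
      finally show ?thesis by simp
    qed
  qed
qed



lemma main2:
  fixes r c :: "nat list"
  assumes rne: "r \<noteq> []" and sr: "sorted_wrt (<) r" and cne: "c \<noteq> []" and sc: "sorted_wrt (<) c"
  and h: "hd r \<le> last c"
  shows "maximal_ordered_subpair r c (sel_rhat r c) (sel_chat r c) \<and>
            vec_space.rank (length r) (pascal_sub r c) = sel_p r c + 1 \<and>
            invertible_mat (pascal_sub (sel_rhat r c) (sel_chat r c)) \<and>
            distinct (rows (pascal_sub (sel_rhat r c) c)) \<and>
            \<not> LinearCombinations.module.lin_dep class_ring (module_vec TYPE(real) (length c))
                (set (rows (pascal_sub (sel_rhat r c) c))) \<and>
            LinearCombinations.module.span class_ring (module_vec TYPE(real) (length c))
                (set (rows (pascal_sub (sel_rhat r c) c)))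
              = LinearCombinations.module.span class_ring (module_vec TYPE(real) (length c))
                (set (rows (pascal_sub r c))) \<and>
            distinct (cols (pascal_sub r (sel_chat r c))) \<and>
            \<not> LinearCombinations.module.lin_dep class_ring (module_vec TYPE(real) (length r))
                (set (cols (pascal_sub r (sel_chat r c)))) \<and>
            LinearCombinations.module.span class_ring (module_vec TYPE(real) (length r))
                (set (cols (pascal_sub r (sel_chat r c))))
              = LinearCombinations.module.span class_ring (module_vec TYPE(real) (length r))
                (set (cols (pascal_sub r c)))"
proof -
  let ?R = "length r" and ?N = "length c"
  have Rpos: "0 < ?R" and Npos: "0 < ?N" using rne cne by auto
  have lastc: "last c = c!(?N - 1)" using cne by (simp add: last_conv_nth)
  have hdr: "hd r = r!0" using rne by (simp add: hd_conv_nth)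
  have rmono: "i \<le> j \<Longrightarrow> j < ?R \<Longrightarrow> r!i \<le> r!j" for i j using sorted_nth_le[OF sr] .
  have cmono: "i \<le> j \<Longrightarrow> j < ?N \<Longrightarrow> c!i \<le> c!j" for i j using sorted_nth_le[OF sc] .
  have cle: "k < ?N \<Longrightarrow> c!k \<le> last c" for k using cmono[of k "?N - 1"] lastc by simp
  define M where "M = selM r c"
  have PM: "M < ?R \<and> r!M \<le> last c"
    unfolding M_def selM_def
    by (rule GreatestI_nat[of _ 0 ?R]) (use Rpos h hdr in auto)
  have M_max: "i \<le> M" if "i < ?R" "r!i \<le> last c" for i
    unfolding M_def selM_def
    by (rule Greatest_le_nat[of _ _ ?R]) (use that in auto)
  have rM: "r!i \<le> c!(?N - 1)" if "i \<le> M" for i using rmono[of i M] PM that lastc by simp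
  define m where "m i = (LEAST k. k < ?N \<and> r!i \<le> c!k)" for i
  have m_props: "m i < ?N \<and> r!i \<le> c!(m i)" if "i \<le> M" for i
    unfolding m_def by (rule LeastI[of _ "?N - 1"]) (use Npos rM[OF that] in auto)
  have m_min: "c!k < r!i" if "i \<le> M" "k < m i" for i k
  proof -
    have "\<not> (k < ?N \<and> r!i \<le> c!k)" unfolding m_def by (rule not_less_Least) (use that in \<open>simp add: m_def\<close>)
    then show ?thesis using that m_props[OF that(1)] by auto
  qed
  define \<beta> where "\<beta> = sel_beta r c"
  have beta0: "\<beta> 0 = m 0" by (simp add: \<beta>_def m_def)
  have betaS: "\<beta> (Suc i) = max (m (Suc i)) (\<beta> i + 1)" for i by (simp add: \<beta>_def m_def)
  have beta_mono: "\<beta> i < \<beta> j" if "i < j" for i j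
    using lift_Suc_mono_less[of \<beta>, OF _ that] betaS by fastforce
  have beta_ge: "m i \<le> \<beta> i" for i by (cases i) (auto simp: beta0 betaS)
  define p where "p = sel_p r c"
  have p_props: "p \<le> M \<and> \<beta> p < ?N"
    unfolding p_def sel_p_def \<beta>_def[symmetric] M_def[symmetric]
    by (rule GreatestI_nat[of _ 0 M]) (use m_props[of 0] beta0 in auto)
  have p_max: "i \<le> p" if "i \<le> M" "\<beta> i < ?N" for i
    unfolding p_def sel_p_def \<beta>_def[symmetric] M_def[symmetric]
    by (rule Greatest_le_nat[of _ _ M]) (use that in auto)
  have beta_lt: "\<beta> i < ?N" if "i \<le> p" for i
    using beta_mono[of i p] p_props that by (cases "i = p") auto
  define P where "P = p + 1"
  have PR: "P \<le> ?R" using p_props PM by (simp add: P_def)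
  have inter_gen: "r!i \<le> c!(\<beta> i)" if "i \<le> p" for i
    using m_props[of i] cmono[of "m i" "\<beta> i"] beta_ge[of i] beta_lt[OF that] p_props that by auto
  define rh where "rh = sel_rhat r c"
  define ch where "ch = sel_chat r c"
  have rh_def': "rh = take P r" by (simp add: rh_def sel_rhat_def P_def p_def)
  have ch_def': "ch = map (\<lambda>i. c!\<beta> i) [0..<P]" by (simp add: ch_def sel_chat_def P_def p_def \<beta>_def)
  have lrh: "length rh = P" using PR by (simp add: rh_def')
  have lch: "length ch = P" by (simp add: ch_def')
  have rhi: "rh!i = r!i" if "i < P" for i using that PR by (simp add: rh_def')
  have chi: "ch!i = c!(\<beta> i)" if "i < P" for i using that by (simp add: ch_def')
  have s_rh: "sorted_wrt (<) rh" unfolding rh_def' using sr by (simp add: sorted_wrt_take)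
  have s_ch: "sorted_wrt (<) ch"
    unfolding sorted_wrt_iff_nth_less lch
  proof (intro allI impI)
    fix i j assume "i < j" "j < P"
    then show "ch!i < ch!j" using chi beta_mono[of i j] beta_lt[of j] sc P_def
      by (simp add: sorted_wrt_iff_nth_less)
  qed
  have set_rh: "set rh \<subseteq> set r" unfolding rh_def' by (rule set_take_subset)
  have set_ch: "set ch \<subseteq> set c" unfolding ch_def' using beta_lt P_def by auto
  have inter: "\<forall>i<length rh. rh!i \<le> ch!i" using inter_gen rhi chi lrh P_def by simp
  have dS: "det (pascal_sub rh ch) \<noteq> 0" using pascal_det_pos[OF _ s_rh s_ch inter] lrh lch by simp
  have RP: "\<exists>y. y \<in> carrier_vec P \<and> (\<forall>k<?N. real (c!k choose r!t) = (\<Sum>i<P. y$i * real (c!k choose r!i)))"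
    if t: "t < ?R" for t
  proof (cases "t < P")
    case True
    show ?thesis
    proof (intro exI conjI allI impI)
      show "unit_vec P t \<in> carrier_vec P" by simp
      fix k assume "k < ?N"
      have "(\<Sum>i<P. unit_vec P t $ i * real (c!k choose r!i)) = (\<Sum>i<P. (if i = t then real (c!k choose r!i) else 0))"
        using True by (intro sum.cong refl) (auto simp: unit_vec_def)
      also have "\<dots> = real (c!k choose r!t)" using True by simp
      finally show "real (c!k choose r!t) = (\<Sum>i<P. unit_vec P t $ i * real (c!k choose r!i))" by simp
    qed
  next
    case tP: False
    show ?thesis
    proof (cases "r!t \<le> last c")
      case False
      show ?thesis
      proof (intro exI conjI allI impI)
        show "0\<^sub>v P \<in> carrier_vec P" by simp
        fix k assume k: "k < ?N"
        have "c!k < r!t" using cle[OF k] False by simp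
        then show "real (c!k choose r!t) = (\<Sum>i<P. 0\<^sub>v P $ i * real (c!k choose r!i))" by simp
      qed
    next
      case True
      have tM: "t \<le> M" using M_max[OF t True] .
      have pM: "Suc p \<le> M" using tM tP P_def by simp
      have "\<not> \<beta> (Suc p) < ?N" using p_max[OF pM] by auto
      then have bp: "\<beta> p = ?N - 1" using betaS[of p] m_props[OF pM] p_props by auto
      define j0 where "j0 = (GREATEST i. i \<le> p \<and> \<beta> i = m i)"
      have j0p: "j0 \<le> p \<and> \<beta> j0 = m j0"
        unfolding j0_def by (rule GreatestI_nat[of _ 0 p]) (auto simp: beta0)
      have j0max: "i \<le> j0" if "i \<le> p" "\<beta> i = m i" for i
        unfolding j0_def by (rule Greatest_le_nat[of _ _ p]) (use that in auto)
      have consec: "j0 + d \<le> p \<longrightarrow> \<beta> (j0 + d) = \<beta> j0 + d" for d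
      proof (induction d)
        case 0 then show ?case by simp
      next
        case (Suc d)
        show ?case
        proof
          assume le: "j0 + Suc d \<le> p"
          have "\<beta> (j0 + Suc d) \<noteq> m (j0 + Suc d)" using j0max[OF le] by auto
          then have "\<beta> (j0 + Suc d) = \<beta> (j0 + d) + 1" using betaS[of "j0 + d"] by (simp add: max_def split: if_splits)
          then show "\<beta> (j0 + Suc d) = \<beta> j0 + Suc d" using Suc le by simp
        qed
      qed
      define g where "g = \<beta> j0"
      define q where "q = P - j0"
      have gq0: "?N - 1 = g + (p - j0)" using consec[of "p - j0"] j0p bp by (simp add: g_def)
      have gq: "g + q = ?N"
        using gq0 j0p Npos unfolding q_def P_def by linarith
      have jq: "j0 + q \<le> ?R" using PR j0p by (simp add: q_def P_def)
      have inter': "r!(j0+i) \<le> c!(g+i)" if "i < q" for i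
        using inter_gen[of "j0+i"] consec[of i] that j0p by (simp add: g_def q_def P_def)
      have small: "c!k < r!j0" if "k < g" for k
        using m_min[of j0 k] that j0p p_props by (simp add: g_def)
      obtain y where y: "y \<in> carrier_vec (j0+q)"
        "\<forall>k<?N. real (c!k choose r!t) = (\<Sum>i<j0+q. y$i * real (c!k choose r!i))"
        using row_block[OF sr sc jq gq inter' t] tP j0p small P_def by force
      have "j0 + q = P" using j0p by (simp add: q_def P_def)
      then show ?thesis using y by auto
    qed
  qed
  obtain Y where Y: "\<And>t. t < ?R \<Longrightarrow> Y t \<in> carrier_vec P \<and>
      (\<forall>k<?N. real (c!k choose r!t) = (\<Sum>i<P. Y t $ i * real (c!k choose r!i)))"
    using RP by metis
  define A where "A = pascal_sub r c"
  define B where "B = pascal_sub rh c"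
  define C where "C = pascal_sub r ch"
  define S where "S = pascal_sub rh ch"
  define L where "L = mat ?R P (\<lambda>(t,i). Y t $ i)"
  have A: "A \<in> carrier_mat ?R ?N" by (simp add: A_def)
  have B: "B \<in> carrier_mat P ?N" using lrh pascal_sub_carrier[of rh c] by (simp add: B_def)
  have C: "C \<in> carrier_mat ?R P" using lch pascal_sub_carrier[of r ch] by (simp add: C_def)
  have S: "S \<in> carrier_mat P P" using lrh lch pascal_sub_carrier[of rh ch] by (simp add: S_def)
  have L: "L \<in> carrier_mat ?R P" by (simp add: L_def)
  have ALB: "A = L * B"
  proof (rule eq_matI)
    fix t k assume "t < dim_row (L * B)" "k < dim_col (L * B)"
    then have t: "t < ?R" and k: "k < ?N" using L B by auto
    have "(L * B) $$ (t,k) = (\<Sum>i<P. Y t $ i * real (c!k choose r!i))"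
      using t k L B lrh by (auto simp: scalar_prod_def L_def B_def rhi atLeast0LessThan intro!: sum.cong)
    also have "\<dots> = A $$ (t,k)" using Y[OF t] k t by (simp add: A_def)
    finally show "A $$ (t,k) = (L * B) $$ (t,k)" by simp
  qed (use L B A in auto)
  have CLS: "C = L * S"
  proof (rule eq_matI)
    fix t j assume "t < dim_row (L * S)" "j < dim_col (L * S)"
    then have t: "t < ?R" and j: "j < P" using L S by auto
    have bj: "\<beta> j < ?N" using beta_lt[of j] j P_def by simp
    have "(L * S) $$ (t,j) = (\<Sum>i<P. Y t $ i * real (c!\<beta> j choose r!i))"
      using t j L S lrh lch by (auto simp: scalar_prod_def L_def S_def rhi chi atLeast0LessThan intro!: sum.cong)
    also have "\<dots> = C $$ (t,j)" using Y[OF t] bj t j lch by (simp add: C_def chi)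
    finally show "C $$ (t,j) = (L * S) $$ (t,j)" by simp
  qed (use L S C in auto)
  obtain Si where Si: "Si \<in> carrier_mat P P" "S * Si = 1\<^sub>m P" "Si * S = 1\<^sub>m P"
    using det_inverse_ex[OF S] dS by (auto simp: S_def)
  have colgen: "\<exists>x. x \<in> carrier_vec P \<and> col A k = C *\<^sub>v x" if k: "k < ?N" for k
  proof (intro exI conjI)
    have cb: "col B k \<in> carrier_vec P" using B unfolding carrier_vec_def by auto
    show "Si *\<^sub>v col B k \<in> carrier_vec P" by (rule mult_mat_vec_carrier[OF Si(1) cb])
    have "C *\<^sub>v (Si *\<^sub>v col B k) = L *\<^sub>v (S *\<^sub>v (Si *\<^sub>v col B k))"
      unfolding CLS using L S Si cb by simp
    also have "S *\<^sub>v (Si *\<^sub>v col B k) = col B k"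
      using assoc_mult_mat_vec[OF S Si(1) cb, symmetric] Si cb by simp
    also have "L *\<^sub>v col B k = col A k" unfolding ALB by (rule col_mult2[OF L B k, symmetric])
    finally show "col A k = C *\<^sub>v (Si *\<^sub>v col B k)" by simp
  qed
  have rowgen: "\<exists>y. y \<in> carrier_vec P \<and> col (transpose_mat A) t = transpose_mat B *\<^sub>v y"
    if t: "t < ?R" for t
  proof (intro exI conjI)
    show "Y t \<in> carrier_vec P" using Y[OF t] by simp
    show "col (transpose_mat A) t = transpose_mat B *\<^sub>v Y t"
    proof (rule eq_vecI)
      fix k assume "k < dim_vec (transpose_mat B *\<^sub>v Y t)"
      then have k: "k < ?N" using B by simp
      have "(transpose_mat B *\<^sub>v Y t) $ k = (\<Sum>i<P. Y t $ i * real (c!k choose r!i))"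
        using k B Y[OF t] lrh
        by (auto simp: mult_mat_vec_def scalar_prod_def B_def rhi atLeast0LessThan mult.commute intro!: sum.cong)
      also have "\<dots> = col (transpose_mat A) t $ k" using Y[OF t] k t by (simp add: A_def)
      finally show "col (transpose_mat A) t $ k = (transpose_mat B *\<^sub>v Y t) $ k" by simp
    qed (use A B t in simp)
  qed
  interpret VR: vec_space "TYPE(real)" "length r" .
  interpret VN: vec_space "TYPE(real)" "length c" .
  have kerC: "x = 0\<^sub>v P" if "x \<in> carrier_vec P" "C *\<^sub>v x = 0\<^sub>v ?R" for x
    using pascal_ker[OF set_rh dS _ _] that lrh lch by (simp add: C_def)
  have colres: "distinct (cols C) \<and> VR.lin_indpt (set (cols C)) \<and> VR.span (set (cols C)) = VR.span (set (cols A)) \<and> VR.rank A = P"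
    by (rule VR.gen_cols[OF A C _ kerC colgen]) (simp add: A_def C_def pascal_cols_sub[OF set_ch])
  have kerB: "y = 0\<^sub>v P" if "y \<in> carrier_vec P" "transpose_mat B *\<^sub>v y = 0\<^sub>v ?N" for y
    using pascal_kerT[OF set_ch dS _ _] that lrh lch by (simp add: B_def)
  have rowres: "distinct (cols (transpose_mat B)) \<and> VN.lin_indpt (set (cols (transpose_mat B))) \<and>
      VN.span (set (cols (transpose_mat B))) = VN.span (set (cols (transpose_mat A))) \<and> VN.rank (transpose_mat A) = P"
    by (rule VN.gen_cols[of _ ?R, OF _ _ _ kerB rowgen]) (use A B in \<open>auto simp: A_def B_def pascal_rows_sub[OF set_rh]\<close>)
  have ord: "ordered_subpair r c rh ch"
    unfolding ordered_subpair_def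
  proof (intro conjI)
    show "subseq rh r" unfolding rh_def' by (rule prefix_imp_subseq) (rule take_is_prefix)
    have "sorted_wrt (\<le>) c" using sc by (rule sorted_wrt_mono_rel[rotated]) auto
    then show "subseq ch c" by (rule sorted_subset_imp_subseq[OF set_ch s_ch])
    show "length rh = length ch" using lrh lch by simp
    show "\<forall>i<length rh. rh ! i \<le> ch ! i" by (rule inter)
  qed
  have maxl: "length rh' \<le> length rh" if os: "ordered_subpair r c rh' ch'" for rh' ch'
  proof -
    from os have sub1: "subseq rh' r" and sub2: "subseq ch' c" and ll: "length rh' = length ch'"
      and int': "\<forall>i<length rh'. rh'!i \<le> ch'!i" unfolding ordered_subpair_def by auto
    have d': "det (pascal_sub rh' ch') \<noteq> 0"
      using pascal_det_pos[OF ll subseq_sorted[OF sub1 sr] subseq_sorted[OF sub2 sc] int'] .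
    have C': "pascal_sub r ch' \<in> carrier_mat ?R (length ch')" by simp
    have ker': "x = 0\<^sub>v (length ch')" if "x \<in> carrier_vec (length ch')" "pascal_sub r ch' *\<^sub>v x = 0\<^sub>v ?R" for x
      using pascal_ker[OF subseq_set[OF sub1] d' ll that] .
    have di: "distinct (cols (pascal_sub r ch')) \<and> VR.lin_indpt (set (cols (pascal_sub r ch')))"
      by (rule VR.ker_indep[OF C' ker'])
    have "card (set (cols (pascal_sub r ch'))) \<le> VR.rank A"
      by (rule VR.rank_ge_card_indpt[OF A _]) (use di pascal_cols_sub[OF subseq_set[OF sub2], of r] in \<open>auto simp: A_def\<close>)
    moreover have "card (set (cols (pascal_sub r ch'))) = length ch'"
      using di distinct_card by fastforce
    ultimately show ?thesis using colres ll lrh by simp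
  qed
  have inv: "invertible_mat S"
    unfolding invertible_mat_def inverts_mat_def square_mat.simps using S Si by (auto intro!: exI[of _ Si])
  have Peq: "sel_p r c + 1 = P" by (simp add: P_def p_def)
  show ?thesis
    using ord maxl colres rowres inv
    unfolding maximal_ordered_subpair_def Peq
    unfolding A_def B_def C_def S_def rh_def ch_def
    by simp
qed


theorem theorem3:
  fixes r c :: "nat list"
  assumes "selection r" and "selection c"
  shows "(hd r > last c \<longrightarrow>
            pascal_sub r c = 0\<^sub>m (length r) (length c) \<and>
            vec_space.rank (length r) (pascal_sub r c) = 0)
       \<and> (hd r \<le> last c \<longrightarrow>
            maximal_ordered_subpair r c (sel_rhat r c) (sel_chat r c) \<and>
            vec_space.rank (length r) (pascal_sub r c) = sel_p r c + 1 \<and>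
            invertible_mat (pascal_sub (sel_rhat r c) (sel_chat r c)) \<and>
            distinct (rows (pascal_sub (sel_rhat r c) c)) \<and>
            \<not> LinearCombinations.module.lin_dep class_ring (module_vec TYPE(real) (length c))
                (set (rows (pascal_sub (sel_rhat r c) c))) \<and>
            LinearCombinations.module.span class_ring (module_vec TYPE(real) (length c))
                (set (rows (pascal_sub (sel_rhat r c) c)))
              = LinearCombinations.module.span class_ring (module_vec TYPE(real) (length c))
                (set (rows (pascal_sub r c))) \<and>
            distinct (cols (pascal_sub r (sel_chat r c))) \<and>
            \<not> LinearCombinations.module.lin_dep class_ring (module_vec TYPE(real) (length r))
                (set (cols (pascal_sub r (sel_chat r c)))) \<and>
            LinearCombinations.module.span class_ring (module_vec TYPE(real) (length r))
                (set (cols (pascal_sub r (sel_chat r c))))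
              = LinearCombinations.module.span class_ring (module_vec TYPE(real) (length r))
                (set (cols (pascal_sub r c))))"
  proof -
  have rne: "r \<noteq> []" and sr: "sorted_wrt (<) r" using assms(1) by (auto simp: selection_def)
  have cne: "c \<noteq> []" and sc: "sorted_wrt (<) c" using assms(2) by (auto simp: selection_def)
  have part1: "pascal_sub r c = 0\<^sub>m (length r) (length c) \<and> vec_space.rank (length r) (pascal_sub r c) = 0"
    if h: "hd r > last c"
  proof -
    have lastc: "last c = c!(length c - 1)" using cne by (simp add: last_conv_nth)
    have hdr: "hd r = r!0" using rne by (simp add: hd_conv_nth)
    have z: "pascal_sub r c = 0\<^sub>m (length r) (length c)"
    proof (rule eq_matI)
      fix i j assume "i < dim_row (0\<^sub>m (length r) (length c))" "j < dim_col (0\<^sub>m (length r) (length c))"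
      then have i: "i < length r" and j: "j < length c" by auto
      have "c!j \<le> c!(length c - 1)" using sorted_nth_le[OF sc, of j "length c - 1"] j by simp
      moreover have "r!0 \<le> r!i" using sorted_nth_le[OF sr, of 0 i] i by simp
      ultimately have "c!j < r!i" using h lastc hdr by simp
      then show "pascal_sub r c $$ (i,j) = 0\<^sub>m (length r) (length c) $$ (i,j)" using i j by simp
    qed auto
    then show ?thesis using vec_space.rank_0I by simp
  qed
  show ?thesis
    using part1 main2[OF rne sr cne sc] by (auto simp: not_less)
qed

end
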